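(* Let $D:\mathbb R^2\setminus\{0\}\to\mathbb R$ be nonnegative, bounded and continuously differentiable, and consider $\ddot x+D(x)\dot x=-x/|x|^3$. Let $T,r_A,r_B>0$ and let $x_n:[-T,0]\to\mathbb R^2\setminus\{0\}$ be solutions with $|x_n(-T)|=r_A$ and $|x_n(0)|=r_B$ such that $\{\dot r_n(0)\}$ is bounded, where $r_n=|x_n|$. Then $\{c_n(0)\}$ is bounded, where $c_n=\det(x_n,\dot x_n)$. *)

theory Defs
  imports "HOL-Analysis.Analysis"
begin

definition det2 :: "real^2 \<Rightarrow> real^2 \<Rightarrow> real" where
  "det2 u v = u$1 * v$2 - u$2 * v$1"

end

theory Submission
  imports Defs
begin

lemma mono_within:
  fixes f f' :: "real \<Rightarrow> real"
  assumes "a \<le> b" "\<And>t. t \<in> {a..b} \<Longrightarrow> (f has_real_derivative f' t) (at t within {a..b})"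
    "\<And>t. t \<in> {a..b} \<Longrightarrow> f' t \<ge> 0"
  shows "f a \<le> f b"
proof (rule DERIV_nonneg_imp_increasing_open[OF assms(1)])
  fix t assume "a < t" "t < b"
  then show "\<exists>y. DERIV f t :> y \<and> 0 \<le> y"
    using assms(2)[of t] assms(3)[of t] at_within_Icc_at[of a t b] by auto
next
  show "continuous_on {a..b} f"
    using assms(2) DERIV_continuous continuous_on_eq_continuous_within by blast
qed

lemma anti_within:
  fixes f f' :: "real \<Rightarrow> real"
  assumes "a \<le> b" "\<And>t. t \<in> {a..b} \<Longrightarrow> (f has_real_derivative f' t) (at t within {a..b})"
    "\<And>t. t \<in> {a..b} \<Longrightarrow> f' t \<le> 0"
  shows "f b \<le> f a"
proof -
  have "(\<lambda>t. - f t) a \<le> (\<lambda>t. - f t) b"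
    by (rule mono_within[where f'="\<lambda>t. - f' t"]) (use assms in \<open>auto intro!: derivative_eq_intros\<close>)
  then show ?thesis by simp
qed

lemma comp_deriv:
  assumes "(x has_vector_derivative v) F"
  shows "((\<lambda>t. x t $ i) has_real_derivative (v $ i)) F"
  using bounded_linear.has_vector_derivative[OF bounded_linear_vec_nth assms]
  by (simp add: has_real_derivative_iff_has_vector_derivative)

lemma norm2: "norm (y::real^2) = sqrt ((y$1)^2 + (y$2)^2)"
  by (simp add: norm_vec_def L2_set_def sum_2)

lemma single:
  fixes x1 x2 v1 v2 d :: "real \<Rightarrow> real" and T M rA rB Ku :: real
  assumes T: "T > 0" and rB: "rB > 0"
    and q_pos: "\<And>t. t \<in> {-T..0} \<Longrightarrow> x1 t ^ 2 + x2 t ^ 2 > 0"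
    and dbd: "\<And>t. t \<in> {-T..0} \<Longrightarrow> 0 \<le> d t \<and> d t \<le> M"
    and dx1: "\<And>t. t \<in> {-T..0} \<Longrightarrow> (x1 has_real_derivative v1 t) (at t within {-T..0})"
    and dx2: "\<And>t. t \<in> {-T..0} \<Longrightarrow> (x2 has_real_derivative v2 t) (at t within {-T..0})"
    and dv1: "\<And>t. t \<in> {-T..0} \<Longrightarrow> (v1 has_real_derivative
       (- (d t * v1 t) - (1 / sqrt (x1 t ^ 2 + x2 t ^ 2) ^ 3) * x1 t)) (at t within {-T..0})"
    and dv2: "\<And>t. t \<in> {-T..0} \<Longrightarrow> (v2 has_real_derivative
       (- (d t * v2 t) - (1 / sqrt (x1 t ^ 2 + x2 t ^ 2) ^ 3) * x2 t)) (at t within {-T..0})"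
    and A: "sqrt (x1 (-T) ^ 2 + x2 (-T) ^ 2) = rA"
    and B: "sqrt (x1 0 ^ 2 + x2 0 ^ 2) = rB"
    and U: "\<bar>x1 0 * v1 0 + x2 0 * v2 0\<bar> \<le> Ku"
  shows "(x1 0 * v2 0 - x2 0 * v1 0) ^ 2 \<le> 2 * rB ^ 2 * (1 / rB + exp (M * T) * (rA ^ 2 + Ku * T) / T ^ 2)"
proof (rule ccontr)
  define S where "S = {-T..0}"
  define q where "q t = x1 t ^ 2 + x2 t ^ 2" for t
  define R where "R t = sqrt (q t)" for t
  define u where "u t = x1 t * v1 t + x2 t * v2 t" for t
  define c where "c t = x1 t * v2 t - x2 t * v1 t" for t
  define V where "V t = v1 t ^ 2 + v2 t ^ 2" for t
  define E where "E t = V t / 2 - 1 / R t" for t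
  define C where "C = \<bar>c 0\<bar>"
  define Bnd where "Bnd = 2 * rB ^ 2 * (1 / rB + exp (M * T) * (rA ^ 2 + Ku * T) / T ^ 2)"
  assume "\<not> (x1 0 * v2 0 - x2 0 * v1 0) ^ 2 \<le> 2 * rB ^ 2 * (1 / rB + exp (M * T) * (rA ^ 2 + Ku * T) / T ^ 2)"
  then have big: "C ^ 2 > Bnd" unfolding C_def c_def Bnd_def by simp
  have S0: "0 \<in> S" "-T \<in> S" using T by (auto simp: S_def)
  have M0: "M \<ge> 0" using dbd[of 0] T by auto
  have Ku0: "Ku \<ge> 0" using U by linarith
  have Bnd_pos: "Bnd > 0" unfolding Bnd_def using rB T Ku0 by (auto intro!: mult_pos_pos add_pos_nonneg divide_nonneg_pos)
  have Cpos: "C > 0"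
  proof -
    have "C \<noteq> 0" using big Bnd_pos by auto
    then show ?thesis unfolding C_def by simp
  qed
  define \<sigma> where "\<sigma> = sgn (c 0)"
  define ct where "ct t = \<sigma> * c t" for t
  have ct0: "ct 0 = C" unfolding ct_def \<sigma>_def C_def by (simp add: sgn_if)
  have \<sigma>sq: "\<sigma> ^ 2 = 1" using Cpos unfolding \<sigma>_def C_def by (auto simp: sgn_if)
  have qpos: "t \<in> S \<Longrightarrow> q t > 0" for t using q_pos unfolding q_def S_def by auto
  have Rpos: "t \<in> S \<Longrightarrow> R t > 0" for t using qpos unfolding R_def by auto
  have Rsq: "t \<in> S \<Longrightarrow> R t ^ 2 = q t" for t using qpos[of t] unfolding R_def by (simp add: less_imp_le)
  have dx1': "t \<in> S \<Longrightarrow> (x1 has_real_derivative v1 t) (at t within S)" for t using dx1 S_def by auto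
  have dx2': "t \<in> S \<Longrightarrow> (x2 has_real_derivative v2 t) (at t within S)" for t using dx2 S_def by auto
  have dv1': "t \<in> S \<Longrightarrow> (v1 has_real_derivative (- (d t * v1 t) - (1 / R t ^ 3) * x1 t)) (at t within S)" for t
    using dv1 S_def R_def q_def by auto
  have dv2': "t \<in> S \<Longrightarrow> (v2 has_real_derivative (- (d t * v2 t) - (1 / R t ^ 3) * x2 t)) (at t within S)" for t
    using dv2 S_def R_def q_def by auto
  have dq: "t \<in> S \<Longrightarrow> (q has_real_derivative 2 * u t) (at t within S)" for t
    unfolding q_def[abs_def] u_def
    by (rule derivative_eq_intros dx1' dx2' refl | assumption | simp add: algebra_simps)+
  have dR: "t \<in> S \<Longrightarrow> (R has_real_derivative u t / R t) (at t within S)" for t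
  proof -
    assume t: "t \<in> S"
    have "((\<lambda>t. sqrt (q t)) has_real_derivative (inverse (sqrt (q t)) / 2) * (2 * u t)) (at t within S)"
      by (rule DERIV_chain2[OF DERIV_real_sqrt dq]) (use qpos[OF t] t in auto)
    then show ?thesis unfolding R_def[abs_def] by (simp add: field_simps)
  qed
  have sub: "\<lbrakk>(f has_real_derivative f') (at t within S); {a..b} \<subseteq> S\<rbrakk>
     \<Longrightarrow> (f has_real_derivative f') (at t within {a..b})" for f f' t a b
    using DERIV_subset by blast
  have subI: "t \<in> S \<Longrightarrow> {t..0} \<subseteq> S" for t unfolding S_def by auto
  have dct: "t \<in> S \<Longrightarrow> (ct has_real_derivative - d t * ct t) (at t within S)" for t
    unfolding ct_def[abs_def] c_def
    apply (rule derivative_eq_intros dx1' dx2' dv1' dv2' refl | assumption)+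
    apply (simp add: algebra_simps)
    done
  have dct2: "t \<in> S \<Longrightarrow> ((\<lambda>t. ct t ^ 2) has_real_derivative - 2 * d t * ct t ^ 2) (at t within S)" for t
    by (rule derivative_eq_intros dct refl | assumption | simp add: algebra_simps power2_eq_square)+
  have ct2: "ct t ^ 2 \<ge> C ^ 2" if t: "t \<in> S" for t
  proof -
    have "(\<lambda>t. ct t ^ 2) 0 \<le> (\<lambda>t. ct t ^ 2) t"
    proof (rule anti_within[where f="\<lambda>t. ct t ^ 2" and f'="\<lambda>t. - 2 * d t * ct t ^ 2"])
      show "t \<le> 0" using t S_def by auto
      fix s assume s: "s \<in> {t..0}"
      then have sS: "s \<in> S" using subI[OF t] by auto
      show "((\<lambda>t. ct t ^ 2) has_real_derivative - 2 * d s * ct s ^ 2) (at s within {t..0})"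
        using sub[OF dct2[OF sS] subI[OF t]] .
      show "- 2 * d s * ct s ^ 2 \<le> 0" using dbd[of s] sS S_def by auto
    qed
    then show ?thesis using ct0 by simp
  qed
  have ctpos: "ct t > 0" if t: "t \<in> S" for t
  proof (rule ccontr)
    assume "\<not> ct t > 0"
    then have "ct t \<le> 0" by simp
    moreover have "continuous_on {t..0} ct"
      unfolding continuous_on_eq_continuous_within
      using DERIV_continuous[OF sub[OF dct subI[OF t]]] subI[OF t] by blast
    moreover have "t \<le> 0" using t S_def by auto
    ultimately obtain s where s: "t \<le> s" "s \<le> 0" "ct s = 0"
      using IVT'[of ct t 0 0] ct0 Cpos by auto
    then have "s \<in> S" using t S_def by auto
    from ct2[OF this] s Cpos show False by simp
  qed
  have ctge: "ct t \<ge> C" if t: "t \<in> S" for t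
    using ct2[OF t] ctpos[OF t] Cpos by (meson less_imp_le power2_le_imp_le)
  have ctle: "ct t \<le> C * exp (M * T)" if t: "t \<in> S" for t
  proof -
    define g where "g s = ct s * exp (M * s)" for s
    have dg: "s \<in> S \<Longrightarrow> (g has_real_derivative exp (M * s) * (M - d s) * ct s) (at s within S)" for s
      unfolding g_def[abs_def]
      apply (rule derivative_eq_intros dct refl | assumption)+
      apply (simp add: algebra_simps)
      done
    have "g t \<le> g 0"
    proof (rule mono_within[where f=g and f'="\<lambda>s. exp (M * s) * (M - d s) * ct s"])
      show "t \<le> 0" using t S_def by auto
      fix s assume s: "s \<in> {t..0}"
      then have sS: "s \<in> S" using subI[OF t] by auto
      show "(g has_real_derivative exp (M * s) * (M - d s) * ct s) (at s within {t..0})"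
        using sub[OF dg[OF sS] subI[OF t]] .
      show "exp (M * s) * (M - d s) * ct s \<ge> 0" using dbd[of s] sS S_def ctpos[OF sS] by auto
    qed
    then have "ct t * exp (M * t) \<le> C" using ct0 g_def by simp
    then have "ct t \<le> C * exp (- (M * t))" by (simp add: exp_minus field_simps)
    also have "\<dots> \<le> C * exp (M * T)"
    proof -
      have "- (M * t) \<le> M * T" using M0 t S_def mult_left_mono[of "-t" T M] by auto
      then show ?thesis using Cpos by auto
    qed
    finally show ?thesis .
  qed
  have Rne: "t \<in> S \<Longrightarrow> R t \<noteq> 0" for t using Rpos[of t] by auto
  have ctne: "t \<in> S \<Longrightarrow> ct t \<noteq> 0" for t using ctpos[of t] by auto
  have dinvR: "t \<in> S \<Longrightarrow> ((\<lambda>z. 1 / R z) has_real_derivative - (u t / R t ^ 3)) (at t within S)" for t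
    apply (rule DERIV_cong[OF DERIV_divide[OF DERIV_const dR Rne]], assumption+)
    using Rpos[of t] by (simp add: field_simps power3_eq_cube)
  have two_ne: "(2::real) \<noteq> 0" by simp
  have dE: "t \<in> S \<Longrightarrow> (E has_real_derivative - d t * V t) (at t within S)" for t
    unfolding E_def[abs_def] V_def
    apply (rule DERIV_cong)
     apply (rule dinvR dv1' dv2' two_ne derivative_intros | assumption)+
    using Rpos[of t] apply (simp add: u_def field_simps power2_eq_square power3_eq_cube)
    done
  have EgeE0: "E t \<ge> E 0" if t: "t \<in> S" for t
  proof (rule anti_within[where f=E and f'="\<lambda>s. - d s * V s"])
    show "t \<le> 0" using t S_def by auto
    fix s assume s: "s \<in> {t..0}"
    then have sS: "s \<in> S" using subI[OF t] by auto
    show "(E has_real_derivative - d s * V s) (at s within {t..0})"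
      using sub[OF dE[OF sS] subI[OF t]] .
    show "- d s * V s \<le> 0" using dbd[of s] sS S_def by (auto simp: V_def)
  qed
  have R0: "R 0 = rB" using B unfolding R_def q_def .
  have q0: "q 0 = rB ^ 2" using Rsq[OF S0(1)] R0 by simp
  have lag: "q 0 * V 0 = c 0 ^ 2 + u 0 ^ 2" unfolding q_def V_def c_def u_def by algebra
  have V0: "V 0 \<ge> C ^ 2 / rB ^ 2"
  proof -
    have "C ^ 2 \<le> rB ^ 2 * V 0" using lag q0 unfolding C_def by (simp add: add_increasing2)
    then show ?thesis using rB by (simp add: field_simps)
  qed
  have E0: "E 0 \<ge> C ^ 2 / (2 * rB ^ 2) - 1 / rB"
    using V0 R0 unfolding E_def by (simp add: field_simps)
  have Rcube: "t \<in> S \<Longrightarrow> (x1 t * x1 t + x2 t * x2 t) / R t ^ 3 = 1 / R t" for t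
  proof -
    assume t: "t \<in> S"
    have "x1 t * x1 t + x2 t * x2 t = R t ^ 2" using Rsq[OF t] unfolding q_def by (simp add: power2_eq_square)
    moreover have "R t ^ 2 / R t ^ 3 = 1 / R t" using Rpos[OF t] by (simp add: power2_eq_square power3_eq_cube)
    ultimately show ?thesis by simp
  qed
  have du: "t \<in> S \<Longrightarrow> (u has_real_derivative V t - d t * u t - 1 / R t) (at t within S)" for t
    unfolding u_def[abs_def]
    apply (rule DERIV_cong)
     apply (rule dv1' dv2' dx1' dx2' derivative_intros | assumption)+
    apply (drule Rcube)
    apply (simp add: V_def u_def algebra_simps add_divide_distrib power2_eq_square)
    done
  define w where "w t = u t / ct t" for t
  have dw: "t \<in> S \<Longrightarrow> (w has_real_derivative (V t - 1 / R t) / ct t) (at t within S)" for t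
    unfolding w_def[abs_def]
    apply (rule DERIV_cong[OF DERIV_divide[OF du dct ctne]], assumption+)
    using ctne[of t] by (simp add: field_simps)
  have Bge: "Bnd \<ge> 2 * rB ^ 2 * (1 / rB) + 2 * rB ^ 2 * (exp (M * T) * (rA ^ 2 + Ku * T) / T ^ 2)"
    unfolding Bnd_def by (simp add: algebra_simps)
  have E0big: "E 0 > exp (M * T) * (rA ^ 2 + Ku * T) / T ^ 2"
  proof -
    have "C ^ 2 / (2 * rB ^ 2) > (2 * rB ^ 2 * (1 / rB) + 2 * rB ^ 2 * (exp (M * T) * (rA ^ 2 + Ku * T) / T ^ 2)) / (2 * rB ^ 2)"
      using big Bge rB by (intro divide_strict_right_mono) auto
    also have "(2 * rB ^ 2 * (1 / rB) + 2 * rB ^ 2 * (exp (M * T) * (rA ^ 2 + Ku * T) / T ^ 2)) / (2 * rB ^ 2)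
       = 1 / rB + exp (M * T) * (rA ^ 2 + Ku * T) / T ^ 2" using rB by (simp add: field_simps)
    finally show ?thesis using E0 by linarith
  qed
  have E0pos: "E 0 > 0"
    using E0big T Ku0 by (smt (verit) divide_nonneg_pos exp_gt_zero mult_nonneg_nonneg zero_le_power2 zero_less_power)
  define \<beta> where "\<beta> = 2 * E 0 / (C * exp (M * T))"
  have wd_ge: "(V t - 1 / R t) / ct t \<ge> \<beta>" if t: "t \<in> S" for t
  proof -
    have "V t - 1 / R t \<ge> 2 * E 0" using EgeE0[OF t] Rpos[OF t] unfolding E_def by (simp add: field_simps)
    then have "(V t - 1 / R t) / ct t \<ge> 2 * E 0 / ct t" using ctpos[OF t] by (simp add: divide_right_mono)
    moreover have "2 * E 0 / ct t \<ge> 2 * E 0 / (C * exp (M * T))"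
      using ctle[OF t] ctpos[OF t] E0pos by (intro divide_left_mono) auto
    ultimately show ?thesis unfolding \<beta>_def by linarith
  qed
  have wle: "w t \<le> w 0 + \<beta> * t" if t: "t \<in> S" for t
  proof -
    have "(\<lambda>s. w s - \<beta> * s) t \<le> (\<lambda>s. w s - \<beta> * s) 0"
    proof (rule mono_within[where f="\<lambda>s. w s - \<beta> * s" and f'="\<lambda>s. (V s - 1 / R s) / ct s - \<beta>"])
      show "t \<le> 0" using t S_def by auto
      fix s assume s: "s \<in> {t..0}"
      then have sS: "s \<in> S" using subI[OF t] by auto
      show "((\<lambda>s. w s - \<beta> * s) has_real_derivative (V s - 1 / R s) / ct s - \<beta>) (at s within {t..0})"
        apply (rule DERIV_cong)
         apply (rule DERIV_diff[OF sub[OF dw[OF sS] subI[OF t]]])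
         apply (rule derivative_eq_intros refl)+
        apply simp
        done
      show "(V s - 1 / R s) / ct s - \<beta> \<ge> 0" using wd_ge[OF sS] by simp
    qed
    then show ?thesis by simp
  qed
  define a where "a = T * E 0 / exp (M * T) - Ku"
  have aT: "a * T > rA ^ 2"
  proof -
    have "T * E 0 / exp (M * T) > T * (exp (M * T) * (rA ^ 2 + Ku * T) / T ^ 2) / exp (M * T)"
      using E0big T by (intro divide_strict_right_mono mult_strict_left_mono) auto
    also have "T * (exp (M * T) * (rA ^ 2 + Ku * T) / T ^ 2) / exp (M * T) = rA ^ 2 / T + Ku"
      using T by (simp add: field_simps power2_eq_square)
    finally have "a > rA ^ 2 / T" unfolding a_def by linarith
    then show ?thesis using T by (simp add: field_simps)
  qed
  have apos: "a > 0" using aT T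
    by (smt (verit, best) mult_nonpos_nonneg zero_le_power2)
  have w0: "w 0 \<le> Ku / C"
    unfolding w_def using ct0 U Cpos unfolding u_def by (simp add: divide_right_mono)
  have ule: "u t \<le> - a" if t: "t \<in> {-T..-T/2}" for t
  proof -
    have tS: "t \<in> S" using t T S_def by auto
    have "w t \<le> Ku / C + \<beta> * t" using wle[OF tS] w0 by linarith
    also have "\<dots> \<le> Ku / C - \<beta> * T / 2"
    proof -
      have "\<beta> \<ge> 0" unfolding \<beta>_def using E0pos Cpos by simp
      then have "\<beta> * t \<le> \<beta> * (- T / 2)" using t by (intro mult_left_mono) auto
      then show ?thesis by simp
    qed
    also have "\<dots> = - a / C" unfolding \<beta>_def a_def using Cpos by (simp add: field_simps)
    finally have wt: "w t \<le> - a / C" .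
    have "u t = w t * ct t" unfolding w_def using ctne[OF tS] by simp
    also have "\<dots> \<le> (- a / C) * ct t" using wt ctpos[OF tS] by (intro mult_right_mono) auto
    also have "\<dots> \<le> (- a / C) * C"
      using ctge[OF tS] apos Cpos by (intro mult_left_mono_neg) auto
    also have "\<dots> = - a" using Cpos by simp
    finally show ?thesis .
  qed
  have "(\<lambda>s. q s + 2 * a * s) (- T / 2) \<le> (\<lambda>s. q s + 2 * a * s) (- T)"
  proof (rule anti_within[where f="\<lambda>s. q s + 2 * a * s" and f'="\<lambda>s. 2 * u s + 2 * a"])
    show "- T \<le> - T / 2" using T by simp
    have subS: "{- T..- T / 2} \<subseteq> S" using T S_def by auto
    fix s assume s: "s \<in> {- T..- T / 2}"
    then have sS: "s \<in> S" using subS by auto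
    show "((\<lambda>s. q s + 2 * a * s) has_real_derivative 2 * u s + 2 * a) (at s within {- T..- T / 2})"
      apply (rule DERIV_cong)
       apply (rule DERIV_add[OF sub[OF dq[OF sS] subS]])
       apply (rule derivative_eq_intros refl)+
      apply simp
      done
    show "2 * u s + 2 * a \<le> 0" using ule[OF s] by simp
  qed
  moreover have "q (- T) = rA ^ 2" using Rsq[OF S0(2)] A unfolding R_def q_def by simp
  moreover have "q (- T / 2) \<ge> 0" unfolding q_def by simp
  ultimately have "a * T \<le> rA ^ 2" by (simp add: algebra_simps)
  then show False using aT by simp
qed

theorem lemma7p4:
  fixes D :: "real^2 \<Rightarrow> real"
    and D' :: "real^2 \<Rightarrow> ((real^2) \<Rightarrow>\<^sub>L real)"
    and T rA rB :: real
    and x xd :: "nat \<Rightarrow> real \<Rightarrow> real^2"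
    and rd :: "nat \<Rightarrow> real"
  assumes D_nonneg: "\<And>y. y \<noteq> 0 \<Longrightarrow> D y \<ge> 0"
    and D_bounded: "bounded (D ` (- {0}))"
    and D_deriv: "\<And>y. y \<noteq> 0 \<Longrightarrow> (D has_derivative blinfun_apply (D' y)) (at y)"
    and D'_cont: "continuous_on (- {0}) D'"
    and T_pos: "T > 0" and rA_pos: "rA > 0" and rB_pos: "rB > 0"
    and x_nonzero: "\<And>n t. t \<in> {-T..0} \<Longrightarrow> x n t \<noteq> 0"
    and x_deriv: "\<And>n t. t \<in> {-T..0} \<Longrightarrow>
        (x n has_vector_derivative xd n t) (at t within {-T..0})"
    and xd_deriv: "\<And>n t. t \<in> {-T..0} \<Longrightarrow>
        (xd n has_vector_derivative
           (- (D (x n t) *\<^sub>R xd n t) - (1 / norm (x n t) ^ 3) *\<^sub>R x n t))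
        (at t within {-T..0})"
    and x_start: "\<And>n. norm (x n (-T)) = rA"
    and x_end: "\<And>n. norm (x n 0) = rB"
    and rd_deriv: "\<And>n. ((\<lambda>t. norm (x n t)) has_real_derivative rd n) (at 0 within {-T..0})"
    and rd_bounded: "bounded (range rd)"
  shows "bounded (range (\<lambda>n. det2 (x n 0) (xd n 0)))"
proof -
  obtain M where M: "\<And>y. y \<in> - {0} \<Longrightarrow> \<bar>D y\<bar> \<le> M"
    using D_bounded unfolding bounded_iff by auto
  obtain K where K: "\<And>n. \<bar>rd n\<bar> \<le> K"
    using rd_bounded unfolding bounded_iff by auto
  define Bnd where "Bnd = 2 * rB ^ 2 * (1 / rB + exp (M * T) * (rA ^ 2 + rB * K * T) / T ^ 2)"
  have main: "(det2 (x n 0) (xd n 0)) ^ 2 \<le> Bnd" for n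
  proof -
    define x1 where "x1 t = x n t $ 1" for t
    define x2 where "x2 t = x n t $ 2" for t
    define v1 where "v1 t = xd n t $ 1" for t
    define v2 where "v2 t = xd n t $ 2" for t
    have nx: "norm (x n t) = sqrt (x1 t ^ 2 + x2 t ^ 2)" for t
      unfolding x1_def x2_def by (rule norm2)
    have S0: "0 \<in> {-T..0}" using T_pos by auto
    have dx1: "t \<in> {-T..0} \<Longrightarrow> (x1 has_real_derivative v1 t) (at t within {-T..0})" for t
      unfolding x1_def[abs_def] v1_def using comp_deriv[OF x_deriv] by blast
    have dx2: "t \<in> {-T..0} \<Longrightarrow> (x2 has_real_derivative v2 t) (at t within {-T..0})" for t
      unfolding x2_def[abs_def] v2_def using comp_deriv[OF x_deriv] by blast
    have dv1: "t \<in> {-T..0} \<Longrightarrow> (v1 has_real_derivative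
       (- (D (x n t) * v1 t) - (1 / sqrt (x1 t ^ 2 + x2 t ^ 2) ^ 3) * x1 t)) (at t within {-T..0})" for t
      using comp_deriv[OF xd_deriv[of t n], of 1] unfolding nx[symmetric]
      by (simp add: x1_def v1_def[abs_def])
    have dv2: "t \<in> {-T..0} \<Longrightarrow> (v2 has_real_derivative
       (- (D (x n t) * v2 t) - (1 / sqrt (x1 t ^ 2 + x2 t ^ 2) ^ 3) * x2 t)) (at t within {-T..0})" for t
      using comp_deriv[OF xd_deriv[of t n], of 2] unfolding nx[symmetric]
      by (simp add: x2_def v2_def[abs_def])
    have qpos: "t \<in> {-T..0} \<Longrightarrow> x1 t ^ 2 + x2 t ^ 2 > 0" for t
    proof -
      assume t: "t \<in> {-T..0}"
      have "sqrt (x1 t ^ 2 + x2 t ^ 2) > 0" 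
      proof -
        have "norm (x n t) > 0" using x_nonzero[OF t, of n] by simp
        then show ?thesis using nx[of t] by simp
      qed
      then show ?thesis by simp
    qed
    have dnorm: "((\<lambda>t. sqrt (x1 t ^ 2 + x2 t ^ 2)) has_real_derivative
        (x1 0 * v1 0 + x2 0 * v2 0) / rB) (at 0 within {-T..0})"
    proof -
      have dq: "((\<lambda>t. x1 t ^ 2 + x2 t ^ 2) has_real_derivative 2 * (x1 0 * v1 0 + x2 0 * v2 0)) (at 0 within {-T..0})"
        apply (rule DERIV_cong)
         apply (rule dx1[OF S0] dx2[OF S0] derivative_intros)+
        apply simp
        done
      have "((\<lambda>t. sqrt (x1 t ^ 2 + x2 t ^ 2)) has_real_derivative
         (inverse (sqrt (x1 0 ^ 2 + x2 0 ^ 2)) / 2) * (2 * (x1 0 * v1 0 + x2 0 * v2 0))) (at 0 within {-T..0})"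
        by (rule DERIV_chain2[OF DERIV_real_sqrt dq]) (use qpos[OF S0] in auto)
      moreover have "sqrt (x1 0 ^ 2 + x2 0 ^ 2) = rB" using x_end[of n] nx[of 0] by simp
      moreover have "(v1 0 * (x1 0 * 2) + v2 0 * (x2 0 * 2)) / (rB * 2) = (x1 0 * v1 0 + x2 0 * v2 0) / rB"
        using rB_pos by (simp add: field_simps)
      ultimately show ?thesis by (simp add: field_simps)
    qed
    have "rd n = (x1 0 * v1 0 + x2 0 * v2 0) / rB"
    proof -
      have a1: "((\<lambda>t. norm (x n t)) has_vector_derivative rd n) (at 0 within cbox (-T) 0)"
        using rd_deriv[of n] by (simp add: has_real_derivative_iff_has_vector_derivative)
      have a2: "((\<lambda>t. norm (x n t)) has_vector_derivative (x1 0 * v1 0 + x2 0 * v2 0) / rB) (at 0 within cbox (-T) 0)"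
        using dnorm unfolding nx[symmetric] by (simp add: has_real_derivative_iff_has_vector_derivative)
      show ?thesis
        by (rule vector_derivative_unique_within_closed_interval[OF _ _ a1 a2]) (use T_pos in auto)
    qed
    then have "x1 0 * v1 0 + x2 0 * v2 0 = rB * rd n" using rB_pos by (simp add: field_simps)
    then have U: "\<bar>x1 0 * v1 0 + x2 0 * v2 0\<bar> \<le> rB * K"
      using K[of n] rB_pos by (simp add: abs_mult mult_left_mono)
    have "(x1 0 * v2 0 - x2 0 * v1 0) ^ 2 \<le> Bnd"
      unfolding Bnd_def
    proof (rule single[where d="\<lambda>t. D (x n t)"])
      show "T > 0" "rB > 0" by (fact T_pos, fact rB_pos)
    next
      fix t :: real assume t: "t \<in> {-T..0}"
      have "x n t \<in> - {0}" using x_nonzero[OF t] by simp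
      then show "0 \<le> D (x n t) \<and> D (x n t) \<le> M" using D_nonneg[OF x_nonzero[OF t]] M by force
    next
      show "sqrt (x1 (-T) ^ 2 + x2 (-T) ^ 2) = rA" using x_start[of n] nx by simp
      show "sqrt (x1 0 ^ 2 + x2 0 ^ 2) = rB" using x_end[of n] nx by simp
    qed (use qpos dx1 dx2 dv1 dv2 U in auto)
    then show ?thesis unfolding det2_def x1_def x2_def v1_def v2_def by simp
  qed
  show ?thesis unfolding bounded_iff
  proof (intro exI ballI)
    fix z assume "z \<in> range (\<lambda>n. det2 (x n 0) (xd n 0))"
    then obtain n where z: "z = det2 (x n 0) (xd n 0)" by auto
    show "norm z \<le> sqrt Bnd" using main[of n] z real_le_rsqrt by simp
  qed
qed

end
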